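(* Consider single-input single-output discrete-time state-space models (SSMs) $$x_{k+1}=\mathbf{A}x_k+\mathbf{B}u_k,\qquad y_k=\mathbf{C}x_k+\mathbf{D}u_k,\qquad x_0=0,$$ whose state matrix $\mathbf{A}\in\mathbb{R}^{d\times d}$ is a companion matrix. Such companion SSMs can represent each of the following. (i) (ARIMA) Let $p,q,r\ge 0$ be integers and $\phi_1,\dots,\phi_p,\theta_1,\dots,\theta_q\in\mathbb{R}$. Let $L$ denote the lag operator, $(Lz)_k=z_{k-1}$, and consider the ARIMA$(p,r,q)$ relation $$\Big(1-\sum_{i=1}^p\phi_iL^i\Big)(1-L)^r y_k=\Big(1+\sum_{j=1}^q\theta_jL^j\Big)u_k,$$ which, with zero initial conditions ($u_k=y_k=0$ for $k<0$), determines the output sequence $(y_k)_{k\ge0}$ causally from the input sequence $(u_k)_{k\ge0}$. Then there exist $d\ge 1$, a companion matrix $\mathbf{A}\in\mathbb{R}^{d\times d}$, and $\mathbf{B}\in\mathbb{R}^{d\times1}$, $\mathbf{C}\in\mathbb{R}^{1\times d}$, $\mathbf{D}\in\mathbb{R}$ such that, for every input sequence $(u_k)_{k\ge0}$, the SSM output equals $(y_k)_{k\ge0}$. (ii) (Simple exponential smoothing) Let $0<\alpha<1$ and $p\ge1$. There exists a companion SSM with state dimension $d=p$ such that, for every input sequence $(u_k)_{k\ge0}$ (the observed time series) and every $k\ge p$, $$\mathbf{C}x_k=\alpha u_{k-1}+\alpha(1-\alpha)u_{k-2}+\dots+\alpha(1-\alpha)^{p-1}u_{k-p},$$ i.e.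 the SSM reproduces the simple exponential smoothing recursion $y_k=\sum_{i=1}^p\alpha(1-\alpha)^{i-1}y_{k-i}$ when its input is the series itself. (iii) (Controllable LTI systems) Let $\mathbf{A}\in\mathbb{R}^{d\times d}$, $\mathbf{B}\in\mathbb{R}^{d\times 1}$, $\mathbf{C}\in\mathbb{R}^{1\times d}$, $\mathbf{D}\in\mathbb{R}$ define a discrete-time linear time-invariant system with $(\mathbf{A},\mathbf{B})$ controllable, i.e. the Krylov matrix $[\mathbf{B},\mathbf{A}\mathbf{B},\dots,\mathbf{A}^{d-1}\mathbf{B}]$ is invertible. Then there exist a companion matrix $\mathbf{G}\in\mathbb{R}^{d\times d}$ similar to $\mathbf{A}$ and $\mathbf{B}'\in\mathbb{R}^{d\times1}$, $\mathbf{C}'\in\mathbb{R}^{1\times d}$ such that the SSM $(\mathbf{G},\mathbf{B}',\mathbf{C}',\mathbf{D})$ has the same input–output map (from zero initial state) as $(\mathbf{A},\mathbf{B},\mathbf{C},\mathbf{D})$.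
   Context: A $d\times d$ companion matrix is a matrix of the form $$\mathbf{A}=\begin{bmatrix}0&0&\cdots&0&a_0\\1&0&\cdots&0&a_1\\0&1&\cdots&0&a_2\\\vdots&&\ddots&\vdots&\vdots\\0&0&\cdots&1&a_{d-1}\end{bmatrix},$$ i.e. ones on the first subdiagonal, an arbitrary last column $a=(a_0,\dots,a_{d-1})^T\in\mathbb{R}^d$, and zeros elsewhere. Equivalently $\mathbf{A}=\mathbf{S}+a e_d^T$ where $\mathbf{S}$ is the $d\times d$ down-shift matrix (ones on the first subdiagonal, zeros elsewhere) and $e_d$ is the $d$-th standard basis vector. With $x_0=0$, the state is $x_k=\sum_{j=0}^{k-1}\mathbf{A}^{k-1-j}\mathbf{B}u_j$. The paper states this result informally as "A companion state matrix SSM can represent ARIMA, exponential smoothing, and controllable linear time-invariant systems"; the three items give the precise meaning of "represent" used in its proof. *)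

theory Defs
  imports "Jordan_Normal_Form.Matrix" "HOL-Computational_Algebra.Polynomial"
begin

definition shift_mat :: "nat \<Rightarrow> real mat" where
  "shift_mat d = mat d d (\<lambda>(i,j). if i = Suc j then 1 else 0)"

definition companion_mat :: "nat \<Rightarrow> real vec \<Rightarrow> real mat" where
  "companion_mat d a = shift_mat d + mat d d (\<lambda>(i,j). if j = d - 1 then a $ i else 0)"

definition is_companion :: "real mat \<Rightarrow> bool" where
  "is_companion A \<longleftrightarrow> (\<exists>a. dim_vec a = dim_row A \<and> A = companion_mat (dim_row A) a)"

primrec ssm_state :: "real mat \<Rightarrow> real vec \<Rightarrow> (nat \<Rightarrow> real) \<Rightarrow> nat \<Rightarrow> real vec" where
  "ssm_state A B u 0 = 0\<^sub>v (dim_row A)"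
| "ssm_state A B u (Suc k) = A *\<^sub>v ssm_state A B u k + u k \<cdot>\<^sub>v B"

(* output y_k = C x_k + D u_k  (B a column vector, C a row vector, stored as vectors) *)
definition ssm_out :: "real mat \<Rightarrow> real vec \<Rightarrow> real vec \<Rightarrow> real \<Rightarrow> (nat \<Rightarrow> real) \<Rightarrow> nat \<Rightarrow> real" where
  "ssm_out A B C D u k = C \<bullet> ssm_state A B u k + D * u k"

(* lag operator applied i times, with zero initial conditions z_k = 0 for k < 0 *)
definition lag :: "nat \<Rightarrow> (nat \<Rightarrow> real) \<Rightarrow> nat \<Rightarrow> real" where
  "lag i z k = (if i \<le> k then z (k - i) else 0)"

definition lag_apply :: "real poly \<Rightarrow> (nat \<Rightarrow> real) \<Rightarrow> nat \<Rightarrow> real" where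
  "lag_apply P z k = (\<Sum>i\<le>degree P. coeff P i * lag i z k)"

definition arima_ar_poly :: "nat \<Rightarrow> (nat \<Rightarrow> real) \<Rightarrow> nat \<Rightarrow> real poly" where
  "arima_ar_poly p phi r = (1 - (\<Sum>i=1..p. monom (phi i) i)) * [:1, -1:] ^ r"

definition arima_ma_poly :: "nat \<Rightarrow> (nat \<Rightarrow> real) \<Rightarrow> real poly" where
  "arima_ma_poly q theta = 1 + (\<Sum>j=1..q. monom (theta j) j)"

definition arima_rel :: "nat \<Rightarrow> nat \<Rightarrow> nat \<Rightarrow> (nat \<Rightarrow> real) \<Rightarrow> (nat \<Rightarrow> real) \<Rightarrow> (nat \<Rightarrow> real) \<Rightarrow> (nat \<Rightarrow> real) \<Rightarrow> bool" where
  "arima_rel p r q phi theta u y \<longleftrightarrow>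
     (\<forall>k. lag_apply (arima_ar_poly p phi r) y k = lag_apply (arima_ma_poly q theta) u k)"

definition krylov_mat :: "nat \<Rightarrow> real mat \<Rightarrow> real vec \<Rightarrow> real mat" where
  "krylov_mat d A B = mat_of_cols d (map (\<lambda>i. (A ^\<^sub>m i) *\<^sub>v B) [0..<d])"

end

theory Submission
  imports Defs
begin


lemma dim_companion[simp]: "dim_row (companion_mat d a) = d" "dim_col (companion_mat d a) = d"
  unfolding companion_mat_def shift_mat_def by (simp_all only: index_add_mat dim_row_mat dim_col_mat)

lemma companion_carrier[simp]: "companion_mat d a \<in> carrier_mat d d"
  unfolding carrier_mat_def by (simp only: dim_companion mem_Collect_eq conj_absorb refl)

lemma is_companion_companion: "dim_vec a = d \<Longrightarrow> is_companion (companion_mat d a)"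
  unfolding is_companion_def by auto

lemma companion_index: "i < d \<Longrightarrow> j < d \<Longrightarrow> companion_mat d a $$ (i,j) =
   (if i = Suc j then 1 else 0) + (if j = d - 1 then a $ i else 0)"
  by (simp add: companion_mat_def shift_mat_def)

lemma companion_mult:
  assumes x: "x \<in> carrier_vec d" and i: "i < d"
  shows "(companion_mat d a *\<^sub>v x) $ i = (if i = 0 then 0 else x $ (i - 1)) + a $ i * x $ (d - 1)"
proof -
  have "(companion_mat d a *\<^sub>v x) $ i = (\<Sum>j\<in>{0..<d}. companion_mat d a $$ (i,j) * x $ j)"
    using x i by (simp add: scalar_prod_def row_def)
  also have "\<dots> = (\<Sum>j\<in>{0..<d}. (if i = Suc j then x $ j else 0) + (if j = d - 1 then a $ i * x $ (d-1) else 0))"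
    by (rule sum.cong, auto simp: companion_index i distrib_right)
  also have "\<dots> = (\<Sum>j\<in>{0..<d}. (if i = Suc j then x $ j else 0)) + a $ i * x $ (d-1)"
    using i by (simp add: sum.distrib)
  also have "(\<Sum>j\<in>{0..<d}. (if i = Suc j then x $ j else 0)) = (if i = 0 then 0 else x $ (i - 1))"
  proof (cases i)
    case 0 then show ?thesis by simp
  next
    case (Suc i') then show ?thesis using i
      by (simp add: sum.delta)
  qed
  finally show ?thesis .
qed

lemma ssm_state_carrier: "A \<in> carrier_mat d d \<Longrightarrow> B \<in> carrier_vec d \<Longrightarrow> ssm_state A B u k \<in> carrier_vec d"
  by (induction k) auto



lemma part2:
  assumes p: "p \<ge> 1"
  shows "\<exists>A B C (D::real). A \<in> carrier_mat p p \<and> is_companion A \<and>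
        dim_vec B = p \<and> dim_vec C = p \<and>
        (\<forall>u k. k \<ge> p \<longrightarrow>
           C \<bullet> ssm_state A B u k = (\<Sum>i=1..p. alpha * (1 - alpha) ^ (i - 1) * u (k - i)))"
proof -
  define A where "A = companion_mat p (0\<^sub>v p)"
  define B where "B = (unit_vec p 0 :: real vec)"
  define C where "C = vec p (\<lambda>i. alpha * (1 - alpha) ^ i)"
  have Ac: "A \<in> carrier_mat p p" unfolding A_def by (rule companion_carrier)
  have Bc: "B \<in> carrier_vec p" unfolding B_def by (rule unit_vec_carrier)
  have st: "\<forall>i<p. ssm_state A B u k $ i = (if i < k then u (k - 1 - i) else 0)" for u k
  proof (induction k)
    case 0
    have "dim_row A = p" unfolding A_def by (rule dim_companion)
    then show ?case by simp
  next
    case (Suc k)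
    show ?case
    proof (intro allI impI)
      fix i assume i: "i < p"
      have xc: "ssm_state A B u k \<in> carrier_vec p" by (rule ssm_state_carrier[OF Ac Bc])
      have mc: "A *\<^sub>v ssm_state A B u k \<in> carrier_vec p" by (rule mult_mat_vec_carrier[OF Ac xc])
      have "ssm_state A B u (Suc k) $ i = (A *\<^sub>v ssm_state A B u k) $ i + u k * B $ i"
        using i mc Bc by simp
      also have "(A *\<^sub>v ssm_state A B u k) $ i = (if i = 0 then 0 else ssm_state A B u k $ (i - 1))"
        using companion_mult[OF xc i, of "0\<^sub>v p", folded A_def] i by simp
      finally show "ssm_state A B u (Suc k) $ i = (if i < Suc k then u (Suc k - 1 - i) else 0)"
        using Suc i unfolding B_def by (cases i) auto
    qed
  qed
  show ?thesis
  proof (intro exI conjI allI impI)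
    show "A \<in> carrier_mat p p" by (rule Ac)
    show "is_companion A" unfolding A_def by (rule is_companion_companion) simp
    show "dim_vec B = p" unfolding B_def by simp
    show "dim_vec C = p" unfolding C_def by simp
    fix u k assume k: "p \<le> k"
    have "C \<bullet> ssm_state A B u k = (\<Sum>i\<in>{0..<p}. C $ i * ssm_state A B u k $ i)"
      unfolding scalar_prod_def carrier_vecD[OF ssm_state_carrier[OF Ac Bc]] by simp
    also have "\<dots> = (\<Sum>i<p. alpha * (1 - alpha) ^ i * u (k - Suc i))"
      unfolding atLeast0LessThan
      by (rule sum.cong, insert k st[of u k], auto simp: C_def)
    also have "\<dots> = (\<Sum>i=1..p. alpha * (1 - alpha) ^ (i - 1) * u (k - i))"
      by (simp add: sum.atLeast1_atMost_eq)
    finally show "C \<bullet> ssm_state A B u k = (\<Sum>i=1..p. alpha * (1 - alpha) ^ (i - 1) * u (k - i))" .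
  qed
qed



lemma pow_mat_Suc_left: "A \<in> carrier_mat n n \<Longrightarrow> A ^\<^sub>m Suc k = A * A ^\<^sub>m k"
proof (induction k)
  case 0 then show ?case by simp
next
  case (Suc k)
  have "A ^\<^sub>m Suc (Suc k) = (A * A ^\<^sub>m k) * A" using Suc by simp
  also have "\<dots> = A * (A ^\<^sub>m k * A)" using Suc.prems by (simp add: assoc_mult_mat[of _ n n _ n _ n])
  finally show ?case by simp
qed

lemma part3:
  assumes A: "A \<in> carrier_mat d d" and B: "dim_vec B = d" and C: "dim_vec C = d"
    and inv: "invertible_mat (krylov_mat d A B)"
  shows "\<exists>G B' C'. G \<in> carrier_mat d d \<and> is_companion G \<and> similar_mat G A \<and>
         dim_vec B' = d \<and> dim_vec C' = d \<and>
         (\<forall>u k. ssm_out G B' C' D u k = ssm_out A B C D u k)"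
proof -
  define K where "K = krylov_mat d A B"
  have Bc: "B \<in> carrier_vec d" using B by (rule carrier_vecI)
  have Cc: "C \<in> carrier_vec d" using C by (rule carrier_vecI)
  have Kc: "K \<in> carrier_mat d d" unfolding K_def krylov_mat_def by (rule carrier_matI) simp_all
  obtain Ki where i1: "K * Ki = 1\<^sub>m d" and i2: "Ki * K = 1\<^sub>m (dim_row Ki)"
    using inv Kc unfolding K_def[symmetric] invertible_mat_def inverts_mat_def by auto
  have "dim_col Ki = d" using i1 Kc by (metis index_mult_mat(3) index_one_mat(3))
  moreover have "dim_row Ki = d" using i2 Kc by (metis index_mult_mat(3) index_one_mat(3) carrier_matD(2))
  ultimately have Kic: "Ki \<in> carrier_mat d d" by (intro carrier_matI)
  have i2': "Ki * K = 1\<^sub>m d" using i2 Kic by simp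
  have colK: "col K j = (A ^\<^sub>m j) *\<^sub>v B" if "j < d" for j
    unfolding K_def krylov_mat_def using that mult_mat_vec_carrier[OF pow_carrier_mat[OF A] Bc] by (subst col_mat_of_cols) auto
  define G where "G = Ki * A * K"
  have Gc: "G \<in> carrier_mat d d" unfolding G_def using Kic A Kc by simp
  define a where "a = Ki *\<^sub>v ((A ^\<^sub>m d) *\<^sub>v B)"
  have colG: "col G j = Ki *\<^sub>v ((A ^\<^sub>m Suc j) *\<^sub>v B)" if "j < d" for j
  proof -
    have "col G j = (Ki * A) *\<^sub>v col K j" unfolding G_def
      by (rule col_mult2[OF mult_carrier_mat[OF Kic A] Kc that])
    also have "\<dots> = Ki *\<^sub>v (A *\<^sub>v ((A ^\<^sub>m j) *\<^sub>v B))" using colK[OF that] 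
      by (simp add: assoc_mult_mat_vec[OF Kic A] mult_mat_vec_carrier[OF pow_carrier_mat[OF A] Bc] del: pow_mat.simps)
    also have "A *\<^sub>v ((A ^\<^sub>m j) *\<^sub>v B) = (A ^\<^sub>m Suc j) *\<^sub>v B"
      by (simp only: pow_mat_Suc_left[OF A] assoc_mult_mat_vec[OF A pow_carrier_mat[OF A] Bc])
    finally show ?thesis .
  qed
  have KiK: "Ki *\<^sub>v (K *\<^sub>v v) = v" if "v \<in> carrier_vec d" for v
    using that Kic Kc i2' by (metis assoc_mult_mat_vec one_mult_mat_vec)
  have colG2: "col G j = (if j = d - 1 then a else unit_vec d (Suc j))" if "j < d" for j
  proof (cases "j = d - 1")
    case True
    then have "Suc j = d" using that by simp
    then show ?thesis using colG[OF that] True unfolding a_def by simp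
  next
    case False
    then have sj: "Suc j < d" using that by simp
    have "(A ^\<^sub>m Suc j) *\<^sub>v B = col K (Suc j)" using colK[OF sj] by simp
    also have "\<dots> = K *\<^sub>v unit_vec d (Suc j)" using Kc sj
      by (metis col_mult2 col_one one_carrier_mat right_mult_one_mat)
    finally show ?thesis using colG[OF that] False KiK[of "unit_vec d (Suc j)"] by simp
  qed
  have Gcomp: "G = companion_mat d a"
  proof (rule eq_matI)
    fix i j assume i: "i < dim_row (companion_mat d a)" and j: "j < dim_col (companion_mat d a)"
    then have i: "i < d" and j: "j < d" by auto
    have "G $$ (i,j) = col G j $ i" using Gc i j by simp
    also have "\<dots> = companion_mat d a $$ (i,j)" using colG2[OF j] i j
      by (auto simp: companion_index)
    finally show "G $$ (i,j) = companion_mat d a $$ (i,j)" .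
  qed (use Gc in auto)
  have adim: "dim_vec a = d" unfolding a_def using Kic by simp
  have dG: "dim_row G = d" using carrier_matD(1)[OF Gc] .
  have "similar_mat_wit G A Ki K" unfolding similar_mat_wit_def Let_def dG
    using Gc A Kc Kic i1 i2' by (simp add: G_def)
  then have sim: "similar_mat G A" unfolding similar_mat_def by blast
  define B' where "B' = Ki *\<^sub>v B"
  define C' where "C' = transpose_mat K *\<^sub>v C"
  have st: "ssm_state G B' u k = Ki *\<^sub>v ssm_state A B u k" for u k
  proof (induction k)
    case 0
    have "Ki *\<^sub>v 0\<^sub>v d = 0\<^sub>v d"
      by (rule eq_vecI, insert Kic, auto simp: scalar_prod_right_zero[of "row Ki _" d])
    then show ?case using Gc A by simp
  next
    case (Suc k)
    have xc: "ssm_state A B u k \<in> carrier_vec d" using ssm_state_carrier[OF A Bc] .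
    have "ssm_state G B' u (Suc k) = G *\<^sub>v (Ki *\<^sub>v ssm_state A B u k) + u k \<cdot>\<^sub>v B'" using Suc by simp
    also have "G *\<^sub>v (Ki *\<^sub>v ssm_state A B u k) = Ki *\<^sub>v (A *\<^sub>v ssm_state A B u k)"
    proof -
      have "G *\<^sub>v (Ki *\<^sub>v ssm_state A B u k) = (Ki * A) *\<^sub>v (K *\<^sub>v (Ki *\<^sub>v ssm_state A B u k))"
        unfolding G_def by (rule assoc_mult_mat_vec[OF mult_carrier_mat[OF Kic A] Kc mult_mat_vec_carrier[OF Kic xc]])
      also have "K *\<^sub>v (Ki *\<^sub>v ssm_state A B u k) = ssm_state A B u k"
        using assoc_mult_mat_vec[OF Kc Kic xc, symmetric] i1 xc by simp
      also have "(Ki * A) *\<^sub>v ssm_state A B u k = Ki *\<^sub>v (A *\<^sub>v ssm_state A B u k)"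
        by (rule assoc_mult_mat_vec[OF Kic A xc])
      finally show ?thesis .
    qed
    finally show ?case unfolding B'_def using Kic A xc Bc
      by (simp add: mult_add_distrib_mat_vec[of Ki d d] mult_mat_vec[of Ki d d])
  qed
  have out: "ssm_out G B' C' D u k = ssm_out A B C D u k" for u k
  proof -
    have xc: "ssm_state A B u k \<in> carrier_vec d" using ssm_state_carrier[OF A Bc] .
    have "C' \<bullet> ssm_state G B' u k = C \<bullet> (K *\<^sub>v (Ki *\<^sub>v ssm_state A B u k))"
      unfolding st C'_def using Kc Kic xc Cc by (simp add: transpose_vec_mult_scalar[of K d d])
    also have "K *\<^sub>v (Ki *\<^sub>v ssm_state A B u k) = ssm_state A B u k"
      using assoc_mult_mat_vec[OF Kc Kic xc, symmetric] i1 xc by simp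
    finally show ?thesis unfolding ssm_out_def by simp
  qed
  show ?thesis
  proof (intro exI conjI allI)
    show "G \<in> carrier_mat d d" by (rule Gc)
    show "is_companion G" unfolding Gcomp by (rule is_companion_companion[OF adim])
    show "similar_mat G A" by (rule sim)
    show "dim_vec B' = d" unfolding B'_def using carrier_matD(1)[OF Kic] by simp
    show "dim_vec C' = d" unfolding C'_def using carrier_matD(2)[OF Kc] by simp
    show "ssm_out G B' C' D u k = ssm_out A B C D u k" for u k by (rule out)
  qed
qed



lemma lag_Suc_Suc[simp]: "lag (Suc t) f (Suc k) = lag t f k"
  unfolding lag_def by simp

lemma lag_0[simp]: "lag 0 f k = f k"
  unfolding lag_def by simp

lemma lag_Suc_0[simp]: "lag (Suc t) f 0 = 0"
  unfolding lag_def by simp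

lemma lag_add: "lag s (\<lambda>k. f k + g k) k = lag s f k + lag s g k"
  unfolding lag_def by simp

lemma lag_diff: "lag s (\<lambda>k. f k - g k) k = lag s f k - lag s g k"
  unfolding lag_def by simp

lemma lag_apply_ext:
  assumes "degree P \<le> M"
  shows "lag_apply P f k = (\<Sum>s\<le>M. coeff P s * lag s f k)"
  unfolding lag_apply_def
  by (rule sum.mono_neutral_left, insert assms, auto simp: coeff_eq_0)

lemma lag_unique:
  assumes c0: "c 0 = 1" and h: "\<And>k. (\<Sum>s\<le>M. c s * lag s e k) = 0"
  shows "e k = 0"
proof (induction k rule: less_induct)
  case (less k)
  have "0 = (\<Sum>s\<le>M. c s * lag s e k)" using h by simp
  also have "\<dots> = c 0 * lag 0 e k + (\<Sum>i<M. c (Suc i) * lag (Suc i) e k)"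
    by (rule sum.atMost_shift)
  also have "(\<Sum>i<M. c (Suc i) * lag (Suc i) e k) = 0"
    by (rule sum.neutral, insert less, auto simp: lag_def)
  finally show ?case using c0 by simp
qed

lemma companion_state:
  fixes u :: "nat \<Rightarrow> real"
  assumes Bc: "B \<in> carrier_vec d" and a: "dim_vec a = d"
  defines "z \<equiv> (\<lambda>k. ssm_state (companion_mat d a) B u k $ (d - 1))"
  shows "\<forall>i<d. ssm_state (companion_mat d a) B u k $ i =
     (\<Sum>t\<le>i. a $ (i - t) * lag (Suc t) z k + B $ (i - t) * lag (Suc t) u k)"
proof (induction k)
  case 0
  then show ?case by simp
next
  case (Suc k)
  show ?case
  proof (intro allI impI)
    fix i assume i: "i < d"
    let ?x = "ssm_state (companion_mat d a) B u k"
    have xc: "?x \<in> carrier_vec d" by (rule ssm_state_carrier[OF companion_carrier Bc])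
    have mc: "companion_mat d a *\<^sub>v ?x \<in> carrier_vec d" by (rule mult_mat_vec_carrier[OF companion_carrier xc])
    have "ssm_state (companion_mat d a) B u (Suc k) $ i = (companion_mat d a *\<^sub>v ?x) $ i + u k * B $ i"
      using i mc Bc by simp
    also have "(companion_mat d a *\<^sub>v ?x) $ i = (if i = 0 then 0 else ?x $ (i - 1)) + a $ i * z k"
      unfolding z_def by (rule companion_mult[OF xc i])
    finally have e: "ssm_state (companion_mat d a) B u (Suc k) $ i = (if i = 0 then 0 else ?x $ (i - 1)) + a $ i * z k + u k * B $ i" .
    show "ssm_state (companion_mat d a) B u (Suc k) $ i =
       (\<Sum>t\<le>i. a $ (i - t) * lag (Suc t) z (Suc k) + B $ (i - t) * lag (Suc t) u (Suc k))"
    proof (cases i)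
      case 0
      then show ?thesis using e by (simp add: lag_def)
    next
      case (Suc i')
      have IH: "?x $ i' = (\<Sum>t\<le>i'. a $ (i' - t) * lag (Suc t) z k + B $ (i' - t) * lag (Suc t) u k)"
        using Suc.IH i Suc by simp
      have "(\<Sum>t\<le>i. a $ (i - t) * lag (Suc t) z (Suc k) + B $ (i - t) * lag (Suc t) u (Suc k))
          = (a $ i * z k + B $ i * u k) + (\<Sum>t\<le>i'. a $ (i' - t) * lag (Suc t) z k + B $ (i' - t) * lag (Suc t) u k)"
        unfolding Suc by (subst sum.atMost_Suc_shift) simp
      then show ?thesis using e IH Suc by simp
    qed
  qed
qed



lemma part1:
  "\<exists>d A B C D. d \<ge> 1 \<and> A \<in> carrier_mat d d \<and> is_companion A \<and>
        dim_vec B = d \<and> dim_vec C = d \<and>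
        (\<forall>u y. arima_rel p r q phi theta u y \<longrightarrow> (\<forall>k. ssm_out A B C D u k = y k))"
proof -
  define AR where "AR = arima_ar_poly p phi r"
  define MA where "MA = arima_ma_poly q theta"
  define N where "N = max (degree AR) (degree MA)"
  define d where "d = Suc N"
  define ar where "ar = coeff AR"
  define ma where "ma = coeff MA"
  define a where "a = vec d (\<lambda>j. - ar (d - j))"
  define Bv where "Bv = vec d (\<lambda>j. ma (d - j) - ar (d - j))"
  define C where "C = (unit_vec d N :: real vec)"
  define A where "A = companion_mat d a"
  have ar0: "ar 0 = 1" unfolding ar_def AR_def arima_ar_poly_def
    by (simp add: coeff_mult_0 coeff_0_power coeff_sum)
  have ma0: "ma 0 = 1" unfolding ma_def MA_def arima_ma_poly_def
    by (simp add: coeff_sum)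
  have adim: "dim_vec a = d" unfolding a_def by simp
  have Bc: "Bv \<in> carrier_vec d" unfolding Bv_def by (rule vec_carrier)
  have Ac: "A \<in> carrier_mat d d" unfolding A_def by (rule companion_carrier)
  have degAR: "degree AR \<le> d" and degMA: "degree MA \<le> d" unfolding d_def N_def by auto
  have main: "ssm_out A Bv C 1 u k = y k" if rel: "arima_rel p r q phi theta u y" for u y k
  proof -
    define z where "z = (\<lambda>k. ssm_state A Bv u k $ (d - 1))"
    have zk: "z k = (\<Sum>t\<le>N. - ar (Suc t) * lag (Suc t) z k + (ma (Suc t) - ar (Suc t)) * lag (Suc t) u k)" for k
    proof -
      have "z k = (\<Sum>t\<le>N. a $ (N - t) * lag (Suc t) z k + Bv $ (N - t) * lag (Suc t) u k)"
        using companion_state[OF Bc adim, of u k] unfolding z_def A_def d_def by simp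
      also have "\<dots> = (\<Sum>t\<le>N. - ar (Suc t) * lag (Suc t) z k + (ma (Suc t) - ar (Suc t)) * lag (Suc t) u k)"
        by (rule sum.cong, auto simp: a_def Bv_def d_def Suc_diff_le)
      finally show ?thesis .
    qed
    have xc: "ssm_state A Bv u k \<in> carrier_vec d" for k by (rule ssm_state_carrier[OF Ac Bc])
    have out: "ssm_out A Bv C 1 u k = z k + u k" for k
      unfolding ssm_out_def C_def z_def using scalar_prod_left_unit[OF xc, of N k] by (simp add: d_def)
    define y' where "y' = (\<lambda>k. z k + u k)"
    have eq: "(\<Sum>s\<le>d. ar s * lag s y' k) = (\<Sum>s\<le>d. ma s * lag s u k)" for k
    proof -
      let ?Sz = "\<Sum>t\<le>N. ar (Suc t) * lag (Suc t) z k"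
      let ?Su = "\<Sum>t\<le>N. ar (Suc t) * lag (Suc t) u k"
      let ?Mu = "\<Sum>t\<le>N. ma (Suc t) * lag (Suc t) u k"
      have z1: "z k = - ?Sz + (?Mu - ?Su)"
        using zk[of k] by (simp add: sum.distrib sum_negf sum_subtractf left_diff_distrib)
      have "(\<Sum>s\<le>d. ar s * lag s y' k) = ar 0 * y' k + (\<Sum>t\<le>N. ar (Suc t) * (lag (Suc t) z k + lag (Suc t) u k))"
        unfolding d_def y'_def by (subst sum.atMost_Suc_shift) (simp add: lag_add)
      also have "\<dots> = z k + u k + ?Sz + ?Su"
        using ar0 by (simp add: y'_def distrib_left sum.distrib)
      also have "\<dots> = u k + ?Mu" using z1 by simp
      also have "\<dots> = (\<Sum>s\<le>d. ma s * lag s u k)"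
        unfolding d_def using ma0 by (subst sum.atMost_Suc_shift) simp
      finally show ?thesis .
    qed
    have yrel: "(\<Sum>s\<le>d. ar s * lag s y k) = (\<Sum>s\<le>d. ma s * lag s u k)" for k
      using rel unfolding arima_rel_def AR_def[symmetric] MA_def[symmetric]
        lag_apply_ext[OF degAR] lag_apply_ext[OF degMA] ar_def ma_def by simp
    have diff: "(\<Sum>s\<le>d. ar s * lag s (\<lambda>k. y' k - y k) k) = 0" for k
      using eq[of k] yrel[of k] by (simp add: lag_diff right_diff_distrib sum_subtractf)
    have "y' k - y k = 0" by (rule lag_unique[where e="\<lambda>k. y' k - y k", OF ar0 diff])
    then show ?thesis using out unfolding y'_def by simp
  qed
  show ?thesis
  proof (intro exI conjI allI impI)
    show "1 \<le> d" unfolding d_def by simp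
    show "A \<in> carrier_mat d d" by (rule Ac)
    show "is_companion A" unfolding A_def by (rule is_companion_companion[OF adim])
    show "dim_vec Bv = d" unfolding Bv_def by simp
    show "dim_vec C = d" unfolding C_def by simp
    show "ssm_out A Bv C 1 u k = y k" if "arima_rel p r q phi theta u y" for u y k
      by (rule main[OF that])
  qed
qed



theorem proposition1:
  shows
  "(\<forall>(p::nat) (q::nat) (r::nat) (phi::nat \<Rightarrow> real) (theta::nat \<Rightarrow> real).
      \<exists>d A B C D. d \<ge> 1 \<and> A \<in> carrier_mat d d \<and> is_companion A \<and>
        dim_vec B = d \<and> dim_vec C = d \<and>
        (\<forall>u y. arima_rel p r q phi theta u y \<longrightarrow> (\<forall>k. ssm_out A B C D u k = y k)))
   \<and>
   (\<forall>(alpha::real) (p::nat). 0 < alpha \<and> alpha < 1 \<and> p \<ge> 1 \<longrightarrow>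
      (\<exists>A B C (D::real). A \<in> carrier_mat p p \<and> is_companion A \<and>
        dim_vec B = p \<and> dim_vec C = p \<and>
        (\<forall>u k. k \<ge> p \<longrightarrow>
           C \<bullet> ssm_state A B u k = (\<Sum>i=1..p. alpha * (1 - alpha) ^ (i - 1) * u (k - i)))))
   \<and>
   (\<forall>(d::nat) (A::real mat) (B::real vec) (C::real vec) (D::real).
      A \<in> carrier_mat d d \<and> dim_vec B = d \<and> dim_vec C = d \<and>
      invertible_mat (krylov_mat d A B) \<longrightarrow>
      (\<exists>G B' C'. G \<in> carrier_mat d d \<and> is_companion G \<and> similar_mat G A \<and>
         dim_vec B' = d \<and> dim_vec C' = d \<and>
         (\<forall>u k. ssm_out G B' C' D u k = ssm_out A B C D u k)))"
proof (intro conjI allI impI)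
  fix p q r :: nat and phi theta :: "nat \<Rightarrow> real"
  show "\<exists>d A B C D. d \<ge> 1 \<and> A \<in> carrier_mat d d \<and> is_companion A \<and>
        dim_vec B = d \<and> dim_vec C = d \<and>
        (\<forall>u y. arima_rel p r q phi theta u y \<longrightarrow> (\<forall>k. ssm_out A B C D u k = y k))"
    by (rule part1)
next
  fix alpha :: real and p :: nat
  assume h: "0 < alpha \<and> alpha < 1 \<and> p \<ge> 1"
  show "\<exists>A B C (D::real). A \<in> carrier_mat p p \<and> is_companion A \<and>
        dim_vec B = p \<and> dim_vec C = p \<and>
        (\<forall>u k. k \<ge> p \<longrightarrow>
           C \<bullet> ssm_state A B u k = (\<Sum>i=1..p. alpha * (1 - alpha) ^ (i - 1) * u (k - i)))"
    using h by (intro part2) simp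
next
  fix d :: nat and A :: "real mat" and B C :: "real vec" and D :: real
  assume h: "A \<in> carrier_mat d d \<and> dim_vec B = d \<and> dim_vec C = d \<and> invertible_mat (krylov_mat d A B)"
  show "\<exists>G B' C'. G \<in> carrier_mat d d \<and> is_companion G \<and> similar_mat G A \<and>
         dim_vec B' = d \<and> dim_vec C' = d \<and>
         (\<forall>u k. ssm_out G B' C' D u k = ssm_out A B C D u k)"
    using h by (intro part3) simp_all
qed

end
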